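(* For all integers $N\ge 3$ and $2\le k\le N$, $$\alpha\bigl(P^{\mathsf{ucc}}_{k,N}\bigr)^{-1}\;\le\;\frac{N}{N-1}\,\alpha\bigl(P^{\mathsf{ucc}}_{k-1,N-1}\bigr)^{-1}+3\log N.$$
   Context: $\Theta_{k,N}$ denotes the set of $k$-tuples $(x_1,\dots,x_k)\in[N]^k$ with pairwise distinct entries. For $x\in\Theta_{k,N}$, $i\in[k]$, $\ell\in[N]$, define $x^{i,\ell}\in\Theta_{k,N}$: if $\ell\notin\{x_1,\dots,x_k\}$, $x^{i,\ell}$ is $x$ with the $i$-th entry replaced by $\ell$; if $\ell=x_j$ for some $j$, $x^{i,\ell}$ is $x$ with the entries in positions $i$ and $j$ swapped. Uniform $k$-clique $N$-coloring chain $P^{\mathsf{ucc}}_{k,N}$: the Markov chain on $\Theta_{k,N}$ which from state $x$ picks uniformly random $\boldsymbol i\in[k]$ and $\boldsymbol\ell\in[N]$ independently and moves to $x^{\boldsymbol i,\boldsymbol\ell}$. Its stationary distribution is uniform on $\Theta_{k,N}$. Log-Sobolev constant: for an ergodic Markov chain with transition matrix $P$ on finite state space $V$ with stationary distribution $\pi$, $\mathcal E_P(g,g)=\frac12\sum_{x,y\in V}(g(x)-g(y))^2\pi(x)P(x,y)$; for $f:V\to\mathbb R_{\ge 0}$, $\mathrm{Ent}_\pi[f]=\sum_{x}\pi(x)f(x)\log\frac{f(x)}{\mathbb E_\pi[f]}$ (natural log); and $\alpha(P)=\inf\{\mathcal E_P(\sqrt f,\sqrt f)/\mathrm{Ent}_\pi[f]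 : f\ge 0,\ f \text{ non-constant}\}$. *)

theory Defs
  imports Complex_Main
begin

definition dirichlet_form ::
  "'a set \<Rightarrow> ('a \<Rightarrow> real) \<Rightarrow> ('a \<Rightarrow> 'a \<Rightarrow> real) \<Rightarrow> ('a \<Rightarrow> real) \<Rightarrow> real" where
  "dirichlet_form V mu P g =
     (1/2) * (\<Sum>x\<in>V. \<Sum>y\<in>V. (g x - g y)^2 * mu x * P x y)"

definition expect :: "'a set \<Rightarrow> ('a \<Rightarrow> real) \<Rightarrow> ('a \<Rightarrow> real) \<Rightarrow> real" where
  "expect V mu f = (\<Sum>x\<in>V. mu x * f x)"

text \<open>Entropy; note that in Isabelle ln 0 = 0, so terms with f x = 0
contribute 0, matching the convention 0 log 0 = 0.\<close>
definition entropy :: "'a set \<Rightarrow> ('a \<Rightarrow> real) \<Rightarrow> ('a \<Rightarrow> real) \<Rightarrow> real" where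
  "entropy V mu f = (\<Sum>x\<in>V. mu x * f x * ln (f x / expect V mu f))"

definition log_sobolev ::
  "'a set \<Rightarrow> ('a \<Rightarrow> real) \<Rightarrow> ('a \<Rightarrow> 'a \<Rightarrow> real) \<Rightarrow> real" where
  "log_sobolev V mu P =
     Inf {dirichlet_form V mu P (\<lambda>x. sqrt (f x)) / entropy V mu f | f.
            (\<forall>x\<in>V. f x \<ge> 0) \<and> (\<exists>x\<in>V. \<exists>y\<in>V. f x \<noteq> f y)}"

definition Theta :: "nat \<Rightarrow> nat \<Rightarrow> nat list set" where
  "Theta k N = {x. length x = k \<and> distinct x \<and> set x \<subseteq> {1..N}}"

definition move :: "nat list \<Rightarrow> nat \<Rightarrow> nat \<Rightarrow> nat list" where
  "move x i l =
     (if l \<in> set x then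
        (let j = (THE j. j < length x \<and> x ! j = l) in x[i := x ! j, j := x ! i])
      else x[i := l])"

text \<open>Uniform k-clique N-coloring chain: pick i in [k] (here positions 0..k-1)
and l in [N] uniformly and independently.\<close>
definition P_ucc :: "nat \<Rightarrow> nat \<Rightarrow> nat list \<Rightarrow> nat list \<Rightarrow> real" where
  "P_ucc k N x y =
     real (card {(i, l). i < k \<and> l \<in> {1..N} \<and> move x i l = y}) / (real k * real N)"

definition pi_unif :: "nat \<Rightarrow> nat \<Rightarrow> nat list \<Rightarrow> real" where
  "pi_unif k N x = 1 / real (card (Theta k N))"

definition alpha_ucc :: "nat \<Rightarrow> nat \<Rightarrow> real" where
  "alpha_ucc k N = log_sobolev (Theta k N) (pi_unif k N) (P_ucc k N)"

end

theory Submission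
  imports Defs "HOL-Analysis.Analysis"
begin

lemma ln_ge_one_3: assumes "3 \<le> (M::real)" shows "1 \<le> ln M"
proof -
  have "exp 1 \<le> M" using exp_le assms by linarith
  hence "ln (exp 1) \<le> ln M" using assms by (subst ln_le_cancel_iff) auto
  thus ?thesis by simp
qed

lemma R_nonneg:
  fixes M s :: real
  assumes M: "3 \<le> M" and s: "1 \<le> s" "s \<le> M"
  shows "2 * s * ln s \<le> 3 * ln M * (s - 1)"
proof -
  define R where "R = (\<lambda>s::real. 2 * s * ln s - 3 * ln M * (s - 1))"
  have cv: "convex_on {1..M} R"
  proof (rule convex_on_realI[where f'="\<lambda>s. 2 * ln s + 2 - 3 * ln M"])
    show "connected {1..M}" by simp
    fix x assume x: "x \<in> {1..M}"
    show "(R has_real_derivative 2 * ln x + 2 - 3 * ln M) (at x)"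
      unfolding R_def using x
      by (auto intro!: derivative_eq_intros simp: field_simps)
  next
    fix x y assume "x \<in> {1..M}" "y \<in> {1..M}" "x \<le> y"
    thus "2 * ln x + 2 - 3 * ln M \<le> 2 * ln y + 2 - 3 * ln M" by auto
  qed
  define l where "l = (s - 1) / (M - 1)"
  have l: "0 \<le> l" "l \<le> 1" using M s by (auto simp: l_def field_simps)
  have lm: "l * (M - 1) = s - 1" unfolding l_def using M by simp
  have se: "(1 - l) *\<^sub>R 1 + l *\<^sub>R M = s" using lm by (simp add: algebra_simps)
  have "R s \<le> (1 - l) * R 1 + l * R M"
    using convex_onD[OF cv l, of 1 M] M se by auto
  moreover have "R 1 = 0" by (simp add: R_def)
  moreover have "R M = ln M * (3 - M)" by (simp add: R_def algebra_simps)
  moreover have "ln M * (3 - M) \<le> 0" using M ln_ge_one_3[OF M]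
    by (intro mult_nonneg_nonpos) auto
  ultimately have "R s \<le> 0" using l mult_nonneg_nonpos[of l "ln M * (3 - M)"] by simp
  thus ?thesis by (simp add: R_def)
qed

lemma Q_ineq:
  fixes t M :: real
  assumes M: "3 \<le> M" and t: "0 \<le> t" "t \<le> M"
  shows "t^2 * ln (t^2) - t^2 + 1 \<le> 3 * ln M * (t - 1)^2"
proof -
  have lnM: "1 \<le> ln M" by (rule ln_ge_one_3[OF M])
  show ?thesis
  proof (cases "t \<le> 1")
    case True
    show ?thesis
    proof (cases "t = 0")
      case True thus ?thesis using lnM by simp
    next
      case False
      hence tp: "0 < t" using t by auto
      have l2: "ln (t^2) = 2 * ln t" using tp by (simp add: ln_realpow)
      have "ln t \<le> t - 1" using ln_le_minus_one tp by auto
      hence "t^2 * ln (t^2) \<le> t^2 * (2 * (t - 1))" unfolding l2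
        by (intro mult_left_mono) auto
      hence "t^2 * ln (t^2) - t^2 + 1 \<le> (1 - t)^2 * (1 + 2 * t)"
        by (simp add: algebra_simps power2_eq_square)
      also have "\<dots> \<le> (1 - t)^2 * 3" using True by (intro mult_left_mono) auto
      also have "\<dots> \<le> (1 - t)^2 * (3 * ln M)" using lnM by (intro mult_left_mono) auto
      finally show ?thesis by (simp add: power2_commute mult.commute)
    qed
  next
    case False
    hence t1: "1 \<le> t" by simp
    define Q where "Q = (\<lambda>s::real. 3 * ln M * (s - 1)^2 - 2 * s^2 * ln s + s^2 - 1)"
    have "Q 1 \<le> Q t"
    proof (rule DERIV_nonneg_imp_increasing_open[OF t1])
      fix x assume x: "1 < x" "x < t"
      have d: "(Q has_real_derivative 2 * (3 * ln M * (x - 1) - 2 * x * ln x)) (at x)"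
        unfolding Q_def using x
        by (auto intro!: derivative_eq_intros simp: field_simps power2_eq_square)
      have "0 \<le> 3 * ln M * (x - 1) - 2 * x * ln x" using R_nonneg[OF M, of x] x t by auto
      thus "\<exists>y. DERIV Q x :> y \<and> 0 \<le> y" using d by auto
    next
      show "continuous_on {1..t} Q" unfolding Q_def
        by (intro continuous_intros) auto
    qed
    moreover have "Q 1 = 0" by (simp add: Q_def)
    moreover have "ln (t^2) = 2 * ln t" using t1 by (simp add: ln_realpow)
    ultimately show ?thesis by (simp add: Q_def algebra_simps)
  qed
qed

definition ent :: "'a set \<Rightarrow> ('a \<Rightarrow> real) \<Rightarrow> real" where
  "ent S f = (\<Sum>x\<in>S. f x * ln (f x / ((\<Sum>y\<in>S. f y) / real (card S))))"

lemma var_pairs: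
  fixes h :: "'a \<Rightarrow> real"
  assumes fin: "finite I" and M: "card I = M" and Mpos: "M > 0"
  shows "(\<Sum>c\<in>I. (h c - (\<Sum>d\<in>I. h d) / M)^2)
         = (\<Sum>c\<in>I. \<Sum>c'\<in>I. (h c - h c')^2) / (2 * M)"
proof -
  define S where "S = (\<Sum>d\<in>I. h d)"
  define S2 where "S2 = (\<Sum>d\<in>I. (h d)^2)"
  have "(\<Sum>c\<in>I. \<Sum>c'\<in>I. (h c - h c')^2)
      = (\<Sum>c\<in>I. \<Sum>c'\<in>I. (h c)^2 + (h c')^2 - 2 * h c * h c')"
    by (simp add: power2_diff)
  also have "\<dots> = (\<Sum>c\<in>I. M * (h c)^2 + S2 - 2 * h c * S)"
    by (simp add: sum.distrib sum_subtractf sum_distrib_left S2_def S_def M)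
  also have "\<dots> = M * S2 + M * S2 - 2 * S * S"
    by (simp add: sum.distrib sum_subtractf sum_distrib_left sum_distrib_right S2_def S_def M mult.commute mult.left_commute)
  finally have e1: "(\<Sum>c\<in>I. \<Sum>c'\<in>I. (h c - h c')^2) = 2 * M * S2 - 2 * S * S" by simp
  have "(\<Sum>c\<in>I. (h c - S / M)^2) = (\<Sum>c\<in>I. (h c)^2 - 2 * (S / M) * h c + (S/M)^2)"
    by (intro sum.cong refl) (simp add: power2_diff field_simps)
  also have "\<dots> = (\<Sum>c\<in>I. (h c)^2) - (\<Sum>c\<in>I. 2 * (S / M) * h c) + (\<Sum>c\<in>I. (S/M)^2)"
    by (simp add: sum.distrib sum_subtractf)
  also have "\<dots> = S2 - 2 * (S / M) * S + M * (S/M)^2"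
    by (simp add: sum.distrib sum_subtractf sum_distrib_left S2_def S_def M)
  also have "\<dots> = (2 * M * S2 - 2 * S * S) / (2 * M)"
    using Mpos by (simp add: field_simps power2_eq_square)
  finally show ?thesis using e1 by (simp add: S_def)
qed

lemma marginal_ent:
  fixes F :: "'a \<Rightarrow> real"
  assumes fin: "finite I" and M: "card I = M" and Mpos: "M > 0"
    and nn: "\<And>c. c \<in> I \<Longrightarrow> 0 \<le> F c"
  shows "ent I F \<le> 3 * ln (max (real M) 3) / (2 * M) *
            (\<Sum>c\<in>I. \<Sum>c'\<in>I. (sqrt (F c) - sqrt (F c'))^2)"
proof -
  define h where "h = (\<lambda>c. sqrt (F c))"
  define nu where "nu = (\<Sum>c\<in>I. h c) / M"
  define mu where "mu = (\<Sum>c\<in>I. F c) / M"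
  define C where "C = 3 * ln (max (real M) 3)"
  have C0: "0 \<le> C" unfolding C_def by simp
  have hnn: "\<And>c. c \<in> I \<Longrightarrow> 0 \<le> h c" by (simp add: h_def nn)
  have Fh: "\<And>c. c \<in> I \<Longrightarrow> F c = (h c)^2" using nn by (simp add: h_def)
  have pairs: "(\<Sum>c\<in>I. (h c - nu)^2) = (\<Sum>c\<in>I. \<Sum>c'\<in>I. (h c - h c')^2) / (2 * M)"
    unfolding nu_def by (rule var_pairs[OF fin M Mpos])
  have rhs0: "0 \<le> (\<Sum>c\<in>I. \<Sum>c'\<in>I. (sqrt (F c) - sqrt (F c'))^2)"
    by (intro sum_nonneg) auto
  show ?thesis
  proof (cases "nu = 0")
    case True
    have "(\<Sum>c\<in>I. h c) = 0" using True Mpos by (simp add: nu_def)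
    hence "\<forall>c\<in>I. h c = 0" using sum_nonneg_eq_0_iff[OF fin] hnn by blast
    hence "\<forall>c\<in>I. F c = 0" using Fh by auto
    hence "ent I F = 0" by (simp add: ent_def)
    thus ?thesis using rhs0 by (simp add: C0)
  next
    case False
    have nupos: "0 < nu" using False hnn Mpos unfolding nu_def
      by (metis divide_nonneg_pos linorder_neqE_linordered_idom not_less of_nat_0_less_iff sum_nonneg)
    obtain c0 where c0: "c0 \<in> I" "h c0 \<noteq> 0"
    proof -
      have "sum h I \<noteq> 0" using False by (auto simp: nu_def)
      thus ?thesis using that sum.neutral[of I h] by blast
    qed
    have "0 < F c0" using c0 Fh hnn by (metis power2_eq_square not_less_iff_gr_or_eq nn zero_less_power2)
    hence "0 < (\<Sum>c\<in>I. F c)" using fin c0 nn by (metis sum_pos2)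
    hence mupos: "0 < mu" using Mpos by (simp add: mu_def)
    have pw1: "\<And>c. c \<in> I \<Longrightarrow> F c * ln (F c / mu) = F c * ln (F c / nu^2) + F c * ln (nu^2 / mu)"
    proof -
      fix c assume c: "c \<in> I"
      show "F c * ln (F c / mu) = F c * ln (F c / nu^2) + F c * ln (nu^2 / mu)"
      proof (cases "F c = 0")
        case True thus ?thesis by simp
      next
        case False
        hence "0 < F c" using nn c by (simp add: order_less_le)
        thus ?thesis using mupos nupos
          by (simp add: ln_div distrib_left[symmetric])
      qed
    qed
    have "ent I F = (\<Sum>c\<in>I. F c * ln (F c / mu))" by (simp add: ent_def mu_def M)
    also have "\<dots> = (\<Sum>c\<in>I. F c * ln (F c / nu^2)) + (\<Sum>c\<in>I. F c) * ln (nu^2 / mu)"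
      using pw1 by (simp add: sum.distrib sum_distrib_right)
    also have "(\<Sum>c\<in>I. F c) * ln (nu^2 / mu) \<le> (\<Sum>c\<in>I. F c) * (nu^2 / mu - 1)"
      using \<open>0 < (\<Sum>c\<in>I. F c)\<close> mupos nupos
      by (intro mult_left_mono ln_le_minus_one) auto
    also have "(\<Sum>c\<in>I. F c) * (nu^2 / mu - 1) = (\<Sum>c\<in>I. nu^2 - F c)"
      using Mpos mupos by (simp add: mu_def M field_simps sum_subtractf)
    finally have st1: "ent I F \<le> (\<Sum>c\<in>I. F c * ln (F c / nu^2) - F c + nu^2)"
      by (simp add: sum.distrib sum_subtractf algebra_simps)
    have pw2: "F c * ln (F c / nu^2) - F c + nu^2 \<le> C * (h c - nu)^2" if c: "c \<in> I" for c
    proof -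
      define t where "t = h c / nu"
      have t0: "0 \<le> t" using hnn[OF c] nupos by (simp add: t_def)
      have "h c \<le> (\<Sum>d\<in>I. h d)" using fin c hnn by (intro member_le_sum) auto
      hence "h c \<le> M * nu" using Mpos by (simp add: nu_def)
      hence "t \<le> real M" using nupos by (simp add: t_def field_simps)
      hence tM: "t \<le> max (real M) 3" by simp
      have "t^2 * ln (t^2) - t^2 + 1 \<le> 3 * ln (max (real M) 3) * (t - 1)^2"
        by (rule Q_ineq[OF _ t0 tM]) simp
      hence "nu^2 * (t^2 * ln (t^2) - t^2 + 1) \<le> nu^2 * (C * (t - 1)^2)"
        by (simp add: C_def mult_left_mono)
      moreover have "h c = t * nu" using nupos by (simp add: t_def)
      ultimately show ?thesis using Fh[OF c] nupos
        by (simp add: power_mult_distrib algebra_simps power2_eq_square)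
    qed
    have "ent I F \<le> (\<Sum>c\<in>I. C * (h c - nu)^2)"
      using st1 sum_mono[of I "\<lambda>c. F c * ln (F c / nu^2) - F c + nu^2" "\<lambda>c. C * (h c - nu)^2", OF pw2] by linarith
    also have "\<dots> = C * ((\<Sum>c\<in>I. \<Sum>c'\<in>I. (h c - h c')^2) / (2 * M))"
      by (simp add: sum_distrib_left[symmetric] pairs)
    finally show ?thesis by (simp add: C_def h_def)
  qed
qed

lemma ln_less_minus_one: fixes y :: real assumes "0 < y" "y \<noteq> 1" shows "ln y < y - 1"
proof -
  have sy: "0 < sqrt y" using assms by simp
  have "ln y = 2 * ln (sqrt y)" using assms by (simp add: ln_sqrt)
  also have "\<dots> \<le> 2 * (sqrt y - 1)" using ln_le_minus_one[OF sy] by simp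
  also have "\<dots> < y - 1"
  proof -
    have "sqrt y \<noteq> 1" using assms by auto
    hence "0 < (sqrt y - 1)^2" by simp
    hence "0 < (sqrt y)^2 - 2 * sqrt y + 1" by (simp add: power2_diff)
    thus ?thesis using assms by simp
  qed
  finally show ?thesis .
qed

lemma ent_pointwise:
  fixes a m :: real assumes "0 \<le> a" "0 < m"
  shows "a - m \<le> a * ln (a / m)" and "a \<noteq> m \<Longrightarrow> a - m < a * ln (a / m)"
proof -
  { assume "a = 0" hence "a - m \<le> a * ln (a / m) \<and> (a \<noteq> m \<longrightarrow> a - m < a * ln (a / m))"
      using assms by simp }
  moreover
  { assume a0: "a \<noteq> 0"
    hence ap: "0 < a" using assms by simp
    have l: "ln (a / m) = - ln (m / a)" using ap assms by (simp add: ln_div)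
    have "ln (m / a) \<le> m / a - 1" using ap assms by (intro ln_le_minus_one) simp
    hence "a * ln (m / a) \<le> a * (m / a - 1)" using ap by (intro mult_left_mono) auto
    moreover have "a * (m / a - 1) = m - a" using ap by (simp add: field_simps)
    ultimately have 1: "a - m \<le> a * ln (a / m)" unfolding l by linarith
    have "a \<noteq> m \<longrightarrow> a - m < a * ln (a / m)"
    proof
      assume "a \<noteq> m"
      hence "m / a \<noteq> 1" using ap by simp
      hence "ln (m / a) < m / a - 1" using ap assms by (intro ln_less_minus_one) simp_all
      hence "a * ln (m / a) < a * (m / a - 1)" using ap by (intro mult_strict_left_mono) auto
      moreover have "a * (m / a - 1) = m - a" using ap by (simp add: field_simps)
      ultimately show "a - m < a * ln (a / m)" unfolding l by linarith
    qed
    with 1 have "a - m \<le> a * ln (a / m) \<and> (a \<noteq> m \<longrightarrow> a - m < a * ln (a / m))" by blast }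
  ultimately have "a - m \<le> a * ln (a / m) \<and> (a \<noteq> m \<longrightarrow> a - m < a * ln (a / m))" by blast
  thus "a - m \<le> a * ln (a / m)" and "a \<noteq> m \<Longrightarrow> a - m < a * ln (a / m)" by auto
qed

lemma ent_nonneg:
  assumes fin: "finite S" and nn: "\<And>x. x \<in> S \<Longrightarrow> 0 \<le> f x"
  shows "0 \<le> ent S f"
proof (cases "(\<Sum>y\<in>S. f y) = 0")
  case True
  hence "\<forall>x\<in>S. f x = 0" using sum_nonneg_eq_0_iff[OF fin] nn by blast
  thus ?thesis by (simp add: ent_def)
next
  case False
  hence ne: "S \<noteq> {}" by auto
  hence n: "0 < card S" using fin by (simp add: card_gt_0_iff)
  define m where "m = (\<Sum>y\<in>S. f y) / real (card S)"
  have "0 \<le> (\<Sum>y\<in>S. f y)" using nn by (simp add: sum_nonneg)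
  hence mp: "0 < m" using False n by (simp add: m_def)
  have z: "(\<Sum>x\<in>S. f x - m) = 0" using n by (simp add: sum_subtractf m_def)
  have "(\<Sum>x\<in>S. f x - m) \<le> (\<Sum>x\<in>S. f x * ln (f x / m))"
    by (rule sum_mono) (use ent_pointwise(1) nn mp in blast)
  hence "0 \<le> (\<Sum>x\<in>S. f x * ln (f x / m))" using z by simp
  thus ?thesis by (simp add: ent_def m_def)
qed

lemma ent_pos:
  assumes fin: "finite S" and nn: "\<And>x. x \<in> S \<Longrightarrow> 0 \<le> f x"
    and nc: "x1 \<in> S" "x2 \<in> S" "f x1 \<noteq> f x2"
  shows "0 < ent S f"
proof -
  have ne: "S \<noteq> {}" using nc by auto
  hence n: "0 < card S" using fin by (simp add: card_gt_0_iff)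
  define m where "m = (\<Sum>y\<in>S. f y) / real (card S)"
  have "\<exists>x\<in>S. 0 < f x" using nc nn by (cases "f x1 = 0") (auto simp: order_less_le)
  then obtain x0 where "x0 \<in> S" "0 < f x0" by blast
  hence "0 < (\<Sum>y\<in>S. f y)" using fin nn by (metis sum_pos2)
  hence mp: "0 < m" using n by (simp add: m_def)
  obtain x3 where x3: "x3 \<in> S" "f x3 \<noteq> m" using nc by (cases "f x1 = m") auto
  have z: "(\<Sum>x\<in>S. f x - m) = 0" using n by (simp add: sum_subtractf m_def)
  have "(\<Sum>x\<in>S. f x - m) < (\<Sum>x\<in>S. f x * ln (f x / m))"
  proof (rule sum_strict_mono_ex1[OF fin])
    show "\<forall>x\<in>S. f x - m \<le> f x * ln (f x / m)" using ent_pointwise(1) nn mp by blast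
    show "\<exists>a\<in>S. f a - m < f a * ln (f a / m)" using ent_pointwise(2)[of "f x3" m] nn mp x3 by blast
  qed
  hence "0 < (\<Sum>x\<in>S. f x * ln (f x / m))" using z by simp
  thus ?thesis by (simp add: ent_def m_def)
qed

lemma ent_const:
  assumes "\<And>x. x \<in> S \<Longrightarrow> f x = a" and "finite S"
  shows "ent S f = 0"
proof (cases "S = {}")
  case True thus ?thesis by (simp add: ent_def)
next
  case False
  hence "0 < card S" using assms by (simp add: card_gt_0_iff)
  moreover have "(\<Sum>y\<in>S. f y) = real (card S) * a" using assms by simp
  ultimately have "(\<Sum>y\<in>S. f y) / real (card S) = a" by simp
  thus ?thesis using assms by (simp add: ent_def)
qed

lemma entropy_unif:
  assumes "finite V"
  shows "entropy V (\<lambda>_. 1 / real (card V)) f = ent V f / real (card V)"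
proof -
  have e: "expect V (\<lambda>_. 1 / real (card V)) f = (\<Sum>y\<in>V. f y) / real (card V)"
    by (simp add: expect_def sum_divide_distrib)
  show ?thesis unfolding entropy_def e ent_def by (simp add: sum_divide_distrib)
qed

lemma df_nonneg:
  assumes "\<And>x y. x \<in> V \<Longrightarrow> y \<in> V \<Longrightarrow> 0 \<le> P x y" "\<And>x. x \<in> V \<Longrightarrow> 0 \<le> mu x"
  shows "0 \<le> dirichlet_form V mu P g"
  unfolding dirichlet_form_def using assms by (auto intro!: sum_nonneg mult_nonneg_nonneg)

lemma LS_lower:
  assumes fin: "finite V" and two: "x1 \<in> V" "x2 \<in> V" "x1 \<noteq> x2" and B: "0 < B"
    and Pnn: "\<And>x y. x \<in> V \<Longrightarrow> y \<in> V \<Longrightarrow> 0 \<le> P x y"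
    and lsi: "\<And>f. (\<forall>x\<in>V. 0 \<le> f x) \<Longrightarrow>
        entropy V (\<lambda>_. 1 / real (card V)) f \<le> B * dirichlet_form V (\<lambda>_. 1 / real (card V)) P (\<lambda>x. sqrt (f x))"
  shows "1 / B \<le> log_sobolev V (\<lambda>_. 1 / real (card V)) P"
proof -
  let ?mu = "\<lambda>_::'a. 1 / real (card V)"
  let ?S = "{dirichlet_form V ?mu P (\<lambda>x. sqrt (f x)) / entropy V ?mu f | f.
            (\<forall>x\<in>V. f x \<ge> 0) \<and> (\<exists>x\<in>V. \<exists>y\<in>V. f x \<noteq> f y)}"
  have n: "0 < card V" using fin two by (auto simp: card_gt_0_iff)
  have ne: "?S \<noteq> {}"
  proof -
    let ?f = "\<lambda>z. if z = x1 then 1 else (0::real)"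
    have "(\<forall>x\<in>V. ?f x \<ge> 0) \<and> (\<exists>x\<in>V. \<exists>y\<in>V. ?f x \<noteq> ?f y)" using two by auto
    hence "dirichlet_form V ?mu P (\<lambda>x. sqrt (?f x)) / entropy V ?mu ?f \<in> ?S"
      by (intro CollectI exI[of _ ?f]) simp
    thus ?thesis by (intro notI) simp
  qed
  have "1 / B \<le> Inf ?S"
  proof (rule cInf_greatest[OF ne])
    fix z assume "z \<in> ?S"
    then obtain f where z: "z = dirichlet_form V ?mu P (\<lambda>x. sqrt (f x)) / entropy V ?mu f"
      and f: "\<forall>x\<in>V. f x \<ge> 0" "\<exists>x\<in>V. \<exists>y\<in>V. f x \<noteq> f y" by auto
    obtain y1 y2 where "y1 \<in> V" "y2 \<in> V" "f y1 \<noteq> f y2" using f by blast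
    hence "0 < ent V f" using f ent_pos[OF fin] by simp
    hence ep: "0 < entropy V ?mu f" using n by (simp add: entropy_unif[OF fin])
    have "entropy V ?mu f \<le> B * dirichlet_form V ?mu P (\<lambda>x. sqrt (f x))" using lsi f(1) by simp
    thus "1 / B \<le> z" unfolding z using ep B by (simp add: divide_simps mult.commute)
  qed
  thus ?thesis by (simp add: log_sobolev_def)
qed

lemma LS_upper:
  assumes fin: "finite V" and a: "0 < log_sobolev V (\<lambda>_. 1 / real (card V)) P"
    and Pnn: "\<And>x y. x \<in> V \<Longrightarrow> y \<in> V \<Longrightarrow> 0 \<le> P x y"
    and f: "\<forall>x\<in>V. 0 \<le> f x"
  shows "entropy V (\<lambda>_. 1 / real (card V)) f \<le>
         (1 / log_sobolev V (\<lambda>_. 1 / real (card V)) P) * dirichlet_form V (\<lambda>_. 1 / real (card V)) P (\<lambda>x. sqrt (f x))"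
proof -
  let ?mu = "\<lambda>_::'a. 1 / real (card V)"
  let ?S = "{dirichlet_form V ?mu P (\<lambda>x. sqrt (f x)) / entropy V ?mu f | f.
            (\<forall>x\<in>V. f x \<ge> 0) \<and> (\<exists>x\<in>V. \<exists>y\<in>V. f x \<noteq> f y)}"
  let ?a = "log_sobolev V ?mu P"
  have dfnn: "\<And>g. 0 \<le> dirichlet_form V ?mu P g" by (rule df_nonneg) (use Pnn in auto)
  show ?thesis
  proof (cases "\<exists>x\<in>V. \<exists>y\<in>V. f x \<noteq> f y")
    case False
    then obtain a where "\<And>x. x \<in> V \<Longrightarrow> f x = a" by metis
    hence "ent V f = 0" using ent_const fin by blast
    hence "entropy V ?mu f = 0" by (simp add: entropy_unif[OF fin])
    thus ?thesis using dfnn a by simp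
  next
    case True
    hence mem: "dirichlet_form V ?mu P (\<lambda>x. sqrt (f x)) / entropy V ?mu f \<in> ?S" using f
      by (intro CollectI exI[of _ f]) simp
    have bdd: "bdd_below ?S"
    proof (rule bdd_belowI[of _ 0])
      fix z assume "z \<in> ?S"
      then obtain g where z: "z = dirichlet_form V ?mu P (\<lambda>x. sqrt (g x)) / entropy V ?mu g"
        and g: "\<forall>x\<in>V. g x \<ge> 0" by auto
      have "0 \<le> ent V g" using g ent_nonneg[OF fin] by blast
      hence "0 \<le> entropy V ?mu g" by (simp add: entropy_unif[OF fin])
      thus "0 \<le> z" unfolding z using dfnn by simp
    qed
    have le: "?a \<le> dirichlet_form V ?mu P (\<lambda>x. sqrt (f x)) / entropy V ?mu f"
      unfolding log_sobolev_def by (rule cInf_lower[OF mem bdd])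
    obtain x1 x2 where "x1 \<in> V" "x2 \<in> V" "f x1 \<noteq> f x2" using True by blast
    hence "0 < ent V f" using ent_pos[OF fin] f by simp
    moreover have "0 < card V" using fin \<open>x1 \<in> V\<close> card_gt_0_iff by blast
    ultimately have ep: "0 < entropy V ?mu f" by (simp add: entropy_unif[OF fin])
    from le ep a show ?thesis by (simp add: divide_simps mult.commute)
  qed
qed

definition tr :: "nat \<Rightarrow> nat \<Rightarrow> nat \<Rightarrow> nat" where
  "tr a b z = (if z = a then b else if z = b then a else z)"

lemma tr_inj: "inj (tr a b)"
  unfolding tr_def by (rule injI) (auto split: if_splits)

lemma tr_tr: "tr a b (tr a b z) = z"
  unfolding tr_def by auto

lemma tr_sym: "tr a b = tr b a"
  unfolding tr_def by (rule ext) auto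

lemma finite_Theta: "finite (Theta k N)"
proof -
  have "Theta k N \<subseteq> {xs. set xs \<subseteq> {1..N} \<and> length xs = k}" by (auto simp: Theta_def)
  thus ?thesis by (rule finite_subset) (rule finite_lists_length_eq, simp)
qed

lemma the_index:
  assumes "distinct x" "p < length x"
  shows "(THE j. j < length x \<and> x ! j = x ! p) = p"
  using assms by (auto intro!: the_equality simp: nth_eq_iff_index_eq)

lemma move_map:
  assumes d: "distinct x" and i: "i < length x"
  shows "move x i l = map (tr (x ! i) l) x"
proof (cases "l \<in> set x")
  case True
  then obtain p where p: "p < length x" "x ! p = l" by (auto simp: in_set_conv_nth)
  have th: "(THE j. j < length x \<and> x ! j = l) = p" using the_index[OF d p(1)] p by simp
  show ?thesis
  proof (rule nth_equalityI)
    show "length (move x i l) = length (map (tr (x ! i) l) x)"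
      using True th by (simp add: move_def Let_def)
    fix q assume q: "q < length (move x i l)"
    hence q': "q < length x" using True th by (simp add: move_def Let_def)
    show "move x i l ! q = map (tr (x ! i) l) x ! q"
      using True th q' p i d by (auto simp: move_def Let_def tr_def nth_list_update nth_eq_iff_index_eq)
  qed
next
  case False
  show ?thesis
  proof (rule nth_equalityI)
    show "length (move x i l) = length (map (tr (x ! i) l) x)"
      using False by (simp add: move_def)
    fix q assume q: "q < length (move x i l)"
    hence q': "q < length x" using False by (simp add: move_def)
    show "move x i l ! q = map (tr (x ! i) l) x ! q"
      using False q' i d by (auto simp: move_def tr_def nth_list_update nth_eq_iff_index_eq)
  qed
qed

lemma Theta_map_tr:
  assumes x: "x \<in> Theta k N" and a: "a \<in> {1..N}" and b: "b \<in> {1..N}"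
  shows "map (tr a b) x \<in> Theta k N"
proof -
  have "distinct (map (tr a b) x)" using x tr_inj by (auto simp: Theta_def distinct_map inj_on_def inj_def)
  moreover have "set (map (tr a b) x) \<subseteq> {1..N}" using x a b by (auto simp: Theta_def tr_def)
  ultimately show ?thesis using x by (simp add: Theta_def)
qed

lemma move_Theta:
  assumes x: "x \<in> Theta k N" and i: "i < k" and l: "l \<in> {1..N}"
  shows "move x i l \<in> Theta k N"
proof -
  have "move x i l = map (tr (x ! i) l) x" using x i by (intro move_map) (auto simp: Theta_def)
  moreover have "x ! i \<in> {1..N}"
  proof -
    have "x ! i \<in> set x" using x i by (intro nth_mem) (auto simp: Theta_def)
    thus ?thesis using x by (auto simp: Theta_def)
  qed
  ultimately show ?thesis using Theta_map_tr[OF x _ l] by simp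
qed

definition Dsum :: "nat \<Rightarrow> nat \<Rightarrow> (nat list \<Rightarrow> real) \<Rightarrow> real" where
  "Dsum k N g = (\<Sum>x\<in>Theta k N. \<Sum>i<k. \<Sum>l\<in>{1..N}. (g x - g (move x i l))^2)"

lemma count_sum:
  fixes m :: "'p \<Rightarrow> 'v" and w :: "'v \<Rightarrow> real"
  assumes fT: "finite T" and fV: "finite V" and mV: "m ` T \<subseteq> V"
  shows "(\<Sum>y\<in>V. w y * real (card {p \<in> T. m p = y})) = (\<Sum>p\<in>T. w (m p))"
proof -
  have "(\<Sum>p\<in>T. w (m p)) = (\<Sum>y\<in>V. \<Sum>p\<in>{p \<in> T. m p = y}. w (m p))"
    using sum.group[OF fT fV mV, of "\<lambda>p. w (m p)"] by simp
  also have "\<dots> = (\<Sum>y\<in>V. w y * real (card {p \<in> T. m p = y}))"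
    by (intro sum.cong refl) simp
  finally show ?thesis by simp
qed

lemma df_formula:
  "dirichlet_form (Theta k N) (pi_unif k N) (P_ucc k N) g
     = Dsum k N g / (2 * real (card (Theta k N)) * real k * real N)"
proof -
  let ?V = "Theta k N" and ?T = "{..<k} \<times> {1..N}"
  have inner: "(\<Sum>y\<in>?V. (g x - g y)^2 * real (card {(i, l). i < k \<and> l \<in> {1..N} \<and> move x i l = y}))
        = (\<Sum>i<k. \<Sum>l\<in>{1..N}. (g x - g (move x i l))^2)" if x: "x \<in> ?V" for x
  proof -
    have e: "\<And>y. {(i, l). i < k \<and> l \<in> {1..N} \<and> move x i l = y} = {p \<in> ?T. move x (fst p) (snd p) = y}"
      by auto
    have "(\<Sum>y\<in>?V. (g x - g y)^2 * real (card {p \<in> ?T. move x (fst p) (snd p) = y}))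
          = (\<Sum>p\<in>?T. (g x - g (move x (fst p) (snd p)))^2)"
      by (rule count_sum[where w="\<lambda>y. (g x - g y)^2"]) (use x move_Theta finite_Theta in auto)
    also have "\<dots> = (\<Sum>i<k. \<Sum>l\<in>{1..N}. (g x - g (move x i l))^2)"
      by (simp add: sum.cartesian_product case_prod_beta)
    finally show ?thesis by (simp only: e)
  qed
  have "dirichlet_form ?V (pi_unif k N) (P_ucc k N) g
     = (1/2) * (\<Sum>x\<in>?V. (1 / real (card ?V)) / (real k * real N) *
          (\<Sum>y\<in>?V. (g x - g y)^2 * real (card {(i, l). i < k \<and> l \<in> {1..N} \<and> move x i l = y})))"
    unfolding dirichlet_form_def pi_unif_def P_ucc_def
    by (simp add: sum_distrib_left mult.commute mult.left_commute)
  also have "\<dots> = (1/2) * (\<Sum>x\<in>?V. (1 / real (card ?V)) / (real k * real N) *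
          (\<Sum>i<k. \<Sum>l\<in>{1..N}. (g x - g (move x i l))^2))"
    using inner by simp
  also have "\<dots> = Dsum k N g / (2 * real (card ?V) * real k * real N)"
    by (simp add: Dsum_def sum_distrib_left[symmetric] sum_divide_distrib[symmetric])
  finally show ?thesis .
qed

definition Fib :: "nat \<Rightarrow> nat \<Rightarrow> nat \<Rightarrow> nat \<Rightarrow> nat list set" where
  "Fib k N j c = {x \<in> Theta k N. x ! j = c}"

definition sh :: "nat \<Rightarrow> nat \<Rightarrow> nat" where
  "sh c a = (if a < c then a else Suc a)"
definition unsh :: "nat \<Rightarrow> nat \<Rightarrow> nat" where
  "unsh c a = (if a < c then a else a - 1)"

definition ins :: "nat \<Rightarrow> nat \<Rightarrow> nat list \<Rightarrow> nat list" where
  "ins j c x = take j (map (sh c) x) @ c # drop j (map (sh c) x)"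
definition red :: "nat \<Rightarrow> nat \<Rightarrow> nat list \<Rightarrow> nat list" where
  "red j c x = map (unsh c) (take j x @ drop (Suc j) x)"

lemma sh_ne: "sh c a \<noteq> c" by (simp add: sh_def)
lemma sh_inj: "inj (sh c)" by (rule injI) (auto simp: sh_def split: if_splits)
lemma unsh_sh: "unsh c (sh c a) = a" by (simp add: sh_def unsh_def)
lemma sh_unsh: "a \<noteq> c \<Longrightarrow> sh c (unsh c a) = a" by (auto simp: sh_def unsh_def)
lemma unsh_inj: "inj_on (unsh c) (- {c})"
  by (rule inj_onI) (metis ComplD insertI1 sh_unsh)

lemma sh_tr: "sh c (tr a b z) = tr (sh c a) (sh c b) (sh c z)"
  using sh_inj[of c] unfolding tr_def by (auto simp: inj_eq)

lemma distinct_ins_aux: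
  assumes "distinct y" "c \<notin> set y"
  shows "distinct (take j y @ c # drop j y)"
proof -
  have "set (take j y) \<inter> set (drop j y) = {}"
    using set_take_disj_set_drop_if_distinct[OF assms(1)] by simp
  moreover have "c \<notin> set (take j y)" "c \<notin> set (drop j y)"
    using assms(2) set_take_subset set_drop_subset by fastforce+
  ultimately show ?thesis using assms(1) by (auto simp: distinct_append)
qed

lemma ins_Fib:
  assumes k: "1 \<le> k" and j: "j < k" and c: "c \<in> {1..N}" and x: "x \<in> Theta (k - 1) (N - 1)"
  shows "ins j c x \<in> Fib k N j c"
proof -
  let ?y = "map (sh c) x"
  have ly: "length ?y = k - 1" using x by (simp add: Theta_def)
  have dy: "distinct ?y" using x sh_inj by (simp add: Theta_def distinct_map inj_on_def inj_def)
  have cy: "c \<notin> set ?y" by (force simp: sh_def)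
  have xa: "\<forall>a\<in>set x. 1 \<le> a \<and> a \<le> N - 1" using x by (auto simp: Theta_def)
  have sy: "set ?y \<subseteq> {1..N}" using xa by (auto simp: sh_def)
  have "distinct (ins j c x)" unfolding ins_def by (rule distinct_ins_aux[OF dy cy])
  moreover have "length (ins j c x) = k" using ly j k by (simp add: ins_def)
  moreover have "set (ins j c x) \<subseteq> {1..N}"
    using sy c set_take_subset[of j ?y] set_drop_subset[of j ?y] by (auto simp: ins_def)
  moreover have "ins j c x ! j = c" using ly j by (simp add: ins_def nth_append)
  ultimately show ?thesis by (simp add: Fib_def Theta_def)
qed

lemma Fib_split:
  assumes x: "x \<in> Fib k N j c" and j: "j < k"
  shows "x = take j x @ c # drop (Suc j) x"
    "distinct (take j x @ drop (Suc j) x)" "c \<notin> set (take j x @ drop (Suc j) x)"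
proof -
  have l: "j < length x" using x j by (simp add: Fib_def Theta_def)
  show e: "x = take j x @ c # drop (Suc j) x" using id_take_nth_drop[OF l] x by (simp add: Fib_def)
  have "distinct x" using x by (simp add: Fib_def Theta_def)
  hence "distinct (take j x @ c # drop (Suc j) x)" using e by simp
  thus "distinct (take j x @ drop (Suc j) x)" "c \<notin> set (take j x @ drop (Suc j) x)"
    by (auto simp: distinct_append)
qed

lemma red_Theta:
  assumes k: "1 \<le> k" and j: "j < k" and c: "c \<in> {1..N}" and x: "x \<in> Fib k N j c"
  shows "red j c x \<in> Theta (k - 1) (N - 1)"
proof -
  let ?L = "take j x @ drop (Suc j) x"
  note sp = Fib_split[OF x j]
  have lx: "length x = k" using x by (simp add: Fib_def Theta_def)
  have sx: "set x \<subseteq> {1..N}" using x by (simp add: Fib_def Theta_def)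
  have sL: "set ?L \<subseteq> set x" using set_take_subset[of j x] set_drop_subset[of "Suc j" x] by auto
  have "distinct (red j c x)" unfolding red_def distinct_map
    using sp(2,3) inj_on_subset[OF unsh_inj[of c]] by auto
  moreover have "length (red j c x) = k - 1" using lx j by (simp add: red_def)
  moreover have "set (red j c x) \<subseteq> {1..N - 1}"
  proof
    fix b assume "b \<in> set (red j c x)"
    then obtain a where a: "a \<in> set ?L" "b = unsh c a" by (auto simp: red_def)
    have "a \<in> {1..N}" "a \<noteq> c" using a sL sx sp(3) by auto
    thus "b \<in> {1..N - 1}" using a c by (auto simp: unsh_def)
  qed
  ultimately show ?thesis by (simp add: Theta_def)
qed

lemma ins_red:
  assumes j: "j < k" and x: "x \<in> Fib k N j c"
  shows "ins j c (red j c x) = x"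
proof -
  let ?L = "take j x @ drop (Suc j) x"
  note sp = Fib_split[OF x j]
  have lx: "length x = k" using x by (simp add: Fib_def Theta_def)
  have "map (sh c) (map (unsh c) ?L) = ?L"
    using sp(3) by (induct ?L) (auto intro!: map_idI sh_unsh)
  hence m: "map (sh c) (red j c x) = ?L" by (simp add: red_def)
  have "take j ?L = take j x" "drop j ?L = drop (Suc j) x" using lx j by auto
  thus ?thesis unfolding ins_def m using sp(1) lx j by simp
qed

lemma red_ins:
  assumes j: "j < k" and x: "x \<in> Theta (k - 1) (N - 1)"
  shows "red j c (ins j c x) = x"
proof -
  let ?y = "map (sh c) x"
  have ly: "length ?y = k - 1" using x by (simp add: Theta_def)
  have "take j (ins j c x) @ drop (Suc j) (ins j c x) = ?y"
    using ly j by (simp add: ins_def)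
  thus ?thesis by (simp add: red_def unsh_sh map_idI)
qed

lemma bij_ins:
  assumes k: "1 \<le> k" and j: "j < k" and c: "c \<in> {1..N}"
  shows "bij_betw (ins j c) (Theta (k - 1) (N - 1)) (Fib k N j c)"
  by (rule bij_betw_byWitness[where f'="red j c"])
     (use ins_Fib[OF k j c] red_Theta[OF k j c] ins_red[OF j] red_ins[OF j] in auto)

lemma ins_nth:
  assumes j: "j < k" and x: "x \<in> Theta (k - 1) (N - 1)" and i: "i < k - 1"
  shows "ins j c x ! (if i < j then i else Suc i) = sh c (x ! i)"
proof -
  let ?y = "map (sh c) x"
  have ly: "length ?y = k - 1" using x by (simp add: Theta_def)
  show ?thesis
  proof (cases "i < j")
    case True thus ?thesis using ly i j by (simp add: ins_def nth_append)
  next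
    case False
    hence "Suc i - j = Suc (i - j)" by simp
    thus ?thesis using False ly i j by (simp add: ins_def nth_append)
  qed
qed

lemma ins_move:
  assumes k: "1 \<le> k" and j: "j < k" and c: "c \<in> {1..N}"
    and x: "x \<in> Theta (k - 1) (N - 1)" and i: "i < k - 1"
  shows "ins j c (move x i l) = move (ins j c x) (if i < j then i else Suc i) (sh c l)"
proof -
  let ?y = "map (sh c) x"
  let ?T = "tr (sh c (x ! i)) (sh c l)"
  have ly: "length ?y = k - 1" using x by (simp add: Theta_def)
  have dx: "distinct x" "i < length x" using x i by (auto simp: Theta_def)
  have lhs: "move x i l = map (tr (x ! i) l) x" by (rule move_map[OF dx])
  have mm: "map (sh c) (move x i l) = map ?T ?y" by (simp add: lhs sh_tr comp_def)
  have L: "ins j c (move x i l) = take j (map ?T ?y) @ c # drop j (map ?T ?y)"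
    by (simp only: ins_def mm)
  have fi: "ins j c x \<in> Fib k N j c" by (rule ins_Fib[OF k j c x])
  have di: "distinct (ins j c x)" "(if i < j then i else Suc i) < length (ins j c x)"
    using fi i by (auto simp: Fib_def Theta_def)
  have R: "move (ins j c x) (if i < j then i else Suc i) (sh c l) = map ?T (ins j c x)"
    using move_map[OF di] ins_nth[OF j x i] by simp
  have Tc: "?T c = c" using sh_ne[of c] unfolding tr_def by (metis sh_ne)
  have "map ?T (ins j c x) = take j (map ?T ?y) @ ?T c # drop j (map ?T ?y)"
    by (simp only: ins_def map_append list.map take_map drop_map)
  thus ?thesis unfolding L R Tc by simp
qed

lemma sqrt_sum_diff:
  fixes a b :: "'x \<Rightarrow> real"
  assumes fin: "finite S" and a: "\<And>x. x \<in> S \<Longrightarrow> 0 \<le> a x" and b: "\<And>x. x \<in> S \<Longrightarrow> 0 \<le> b x"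
  shows "(sqrt (\<Sum>x\<in>S. a x) - sqrt (\<Sum>x\<in>S. b x))^2 \<le> (\<Sum>x\<in>S. (sqrt (a x) - sqrt (b x))^2)"
proof -
  let ?u = "\<lambda>x. sqrt (a x)" and ?v = "\<lambda>x. sqrt (b x)"
  have la: "L2_set ?u S = sqrt (\<Sum>x\<in>S. a x)" unfolding L2_set_def
    by (intro arg_cong[where f=sqrt] sum.cong) (use a in auto)
  have lb: "L2_set ?v S = sqrt (\<Sum>x\<in>S. b x)" unfolding L2_set_def
    by (intro arg_cong[where f=sqrt] sum.cong) (use b in auto)
  let ?D = "L2_set (\<lambda>x. ?u x - ?v x) S"
  have ld: "?D = sqrt (\<Sum>x\<in>S. (sqrt (a x) - sqrt (b x))^2)" by (simp add: L2_set_def)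
  have t1: "L2_set ?u S \<le> L2_set ?v S + L2_set (\<lambda>x. ?u x - ?v x) S"
    using L2_set_triangle_ineq[of "\<lambda>x. ?v x" "\<lambda>x. ?u x - ?v x" S] by simp
  have t2: "L2_set ?v S \<le> L2_set ?u S + L2_set (\<lambda>x. ?v x - ?u x) S"
    using L2_set_triangle_ineq[of "\<lambda>x. ?u x" "\<lambda>x. ?v x - ?u x" S] by simp
  have "L2_set (\<lambda>x. ?v x - ?u x) S = ?D" unfolding L2_set_def
    by (simp add: power2_commute)
  hence "\<bar>L2_set ?u S - L2_set ?v S\<bar> \<le> ?D" using t1 t2 by linarith
  moreover have "0 \<le> ?D" unfolding L2_set_def by (intro real_sqrt_ge_zero sum_nonneg) simp
  ultimately have "(L2_set ?u S - L2_set ?v S)^2 \<le> ?D^2"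
    by (metis abs_le_square_iff abs_of_nonneg)
  also have "?D^2 = (\<Sum>x\<in>S. (sqrt (a x) - sqrt (b x))^2)" unfolding ld
    by (simp add: sum_nonneg)
  finally show ?thesis by (simp add: la lb)
qed

lemma sum_Fib:
  assumes j: "j < k"
  shows "(\<Sum>x\<in>Theta k N. g x) = (\<Sum>c\<in>{1..N}. \<Sum>x\<in>Fib k N j c. g x)"
proof -
  have im: "(\<lambda>x. x ! j) ` Theta k N \<subseteq> {1..N}"
  proof
    fix y assume "y \<in> (\<lambda>x. x ! j) ` Theta k N"
    then obtain x where x: "x \<in> Theta k N" "y = x ! j" by blast
    have "x ! j \<in> set x" using x j by (intro nth_mem) (simp add: Theta_def)
    thus "y \<in> {1..N}" using x by (auto simp: Theta_def)
  qed
  show ?thesis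
    using sum.group[OF finite_Theta finite_atLeastAtMost im, of g] by (simp add: Fib_def)
qed

lemma card_Fib:
  assumes "1 \<le> k" "j < k" "c \<in> {1..N}"
  shows "card (Fib k N j c) = card (Theta (k - 1) (N - 1))"
  using bij_betw_same_card[OF bij_ins[OF assms]] by simp

lemma card_Theta_rec:
  assumes k: "1 \<le> k" "j < k"
  shows "real (card (Theta k N)) = real N * real (card (Theta (k - 1) (N - 1)))"
proof -
  have "real (card (Theta k N)) = (\<Sum>x\<in>Theta k N. 1)" by simp
  also have "\<dots> = (\<Sum>c\<in>{1..N}. \<Sum>x\<in>Fib k N j c. 1)" by (rule sum_Fib[OF k(2)])
  also have "\<dots> = (\<Sum>c\<in>{1..N}. real (card (Theta (k - 1) (N - 1))))"
    by (intro sum.cong refl) (simp add: card_Fib[OF k])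
  finally show ?thesis by simp
qed

lemma Theta_nonempty:
  assumes "k \<le> N" shows "[1..<Suc k] \<in> Theta k N"
  using assms by (auto simp: Theta_def)

lemma Fib_finite: "finite (Fib k N j c)"
  by (rule finite_subset[OF _ finite_Theta]) (auto simp: Fib_def)

lemma chain_rule:
  assumes k: "1 \<le> k" and j: "j < k" and N: "1 \<le> N"
    and kN: "k \<le> N"
    and nn: "\<And>x. x \<in> Theta k N \<Longrightarrow> 0 \<le> f x"
  shows "ent (Theta k N) f = (\<Sum>c\<in>{1..N}. ent (Fib k N j c) f)
          + real (card (Theta (k - 1) (N - 1))) *
            ent {1..N} (\<lambda>c. (\<Sum>x\<in>Fib k N j c. f x) / real (card (Theta (k - 1) (N - 1))))"
proof -
  define n' where "n' = real (card (Theta (k - 1) (N - 1)))"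
  define s where "s = (\<lambda>c. \<Sum>x\<in>Fib k N j c. f x)"
  define mc where "mc = (\<lambda>c. s c / n')"
  define m where "m = (\<Sum>x\<in>Theta k N. f x) / real (card (Theta k N))"
  have n'pos: "0 < n'" unfolding n'_def
    using Theta_nonempty[of "k - 1" "N - 1"] kN finite_Theta card_gt_0_iff by fastforce
  have cn: "real (card (Theta k N)) = real N * n'" unfolding n'_def by (rule card_Theta_rec[OF k j])
  have cF: "\<And>c. c \<in> {1..N} \<Longrightarrow> real (card (Fib k N j c)) = n'"
    unfolding n'_def using card_Fib[OF k j] by simp
  have sumf: "(\<Sum>x\<in>Theta k N. f x) = (\<Sum>c\<in>{1..N}. s c)" unfolding s_def by (rule sum_Fib[OF j])
  have mm: "(\<Sum>c\<in>{1..N}. mc c) / real (card {1..N}) = m"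
    unfolding mc_def m_def cn sumf using n'pos N by (simp add: sum_divide_distrib[symmetric] field_simps)
  have Fsub: "\<And>c. Fib k N j c \<subseteq> Theta k N" by (auto simp: Fib_def)
  have pw: "f x * ln (f x / m) = f x * ln (f x / mc c) + f x * ln (mc c / m)"
    if c: "c \<in> {1..N}" and x: "x \<in> Fib k N j c" for c x
  proof (cases "f x = 0")
    case True thus ?thesis by simp
  next
    case False
    moreover have "0 \<le> f x" using nn Fsub x by blast
    ultimately have fp: "0 < f x" by simp
    have "f x \<le> s c" unfolding s_def
      by (rule member_le_sum[OF x]) (use nn Fsub Fib_finite in auto)
    hence sp: "0 < s c" using fp by simp
    hence mcp: "0 < mc c" using n'pos by (simp add: mc_def)
    have "s c \<le> (\<Sum>c\<in>{1..N}. s c)"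
      by (rule member_le_sum[OF c]) (use nn Fsub in \<open>auto simp: s_def intro!: sum_nonneg\<close>)
    hence "0 < m" using sp n'pos N by (simp add: m_def cn sumf)
    thus ?thesis using fp mcp by (simp add: ln_div distrib_left[symmetric])
  qed
  have "ent (Theta k N) f = (\<Sum>x\<in>Theta k N. f x * ln (f x / m))" by (simp add: ent_def m_def)
  also have "\<dots> = (\<Sum>c\<in>{1..N}. \<Sum>x\<in>Fib k N j c. f x * ln (f x / m))" by (rule sum_Fib[OF j])
  also have "\<dots> = (\<Sum>c\<in>{1..N}. (\<Sum>x\<in>Fib k N j c. f x * ln (f x / mc c)) + s c * ln (mc c / m))"
    by (intro sum.cong refl) (simp add: pw sum.distrib s_def sum_distrib_right)
  also have "\<dots> = (\<Sum>c\<in>{1..N}. ent (Fib k N j c) f) + n' * ent {1..N} mc"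
  proof -
    have "(\<Sum>c\<in>{1..N}. \<Sum>x\<in>Fib k N j c. f x * ln (f x / mc c)) = (\<Sum>c\<in>{1..N}. ent (Fib k N j c) f)"
      by (intro sum.cong refl) (simp add: ent_def cF mc_def s_def)
    moreover have "(\<Sum>c\<in>{1..N}. s c * ln (mc c / m)) = n' * ent {1..N} mc"
      unfolding ent_def mm using n'pos by (simp add: sum_distrib_left mc_def)
    ultimately show ?thesis by (simp add: sum.distrib)
  qed
  finally show ?thesis by (simp add: n'_def mc_def s_def)
qed

definition W :: "(nat list \<Rightarrow> real) \<Rightarrow> nat list \<Rightarrow> nat \<Rightarrow> nat \<Rightarrow> real" where
  "W f x i l = (sqrt (f x) - sqrt (f (move x i l)))^2"

lemma W_nonneg: "0 \<le> W f x i l" by (simp add: W_def)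

definition phi :: "nat \<Rightarrow> nat \<Rightarrow> nat" where
  "phi j i = (if i < j then i else Suc i)"

lemma bij_phi: "j < k \<Longrightarrow> bij_betw (phi j) {..<k - 1} ({..<k} - {j})"
  by (rule bij_betw_byWitness[where f'="\<lambda>i. if i < j then i else i - 1"])
     (auto simp: phi_def)

lemma bij_sh: "c \<in> {1..N} \<Longrightarrow> bij_betw (sh c) {1..N - 1} ({1..N} - {c})"
  by (rule bij_betw_byWitness[where f'="unsh c"])
     (auto simp: sh_def unsh_def)

lemma fiber_dsum:
  assumes k: "1 \<le> k" and j: "j < k" and c: "c \<in> {1..N}"
  shows "Dsum (k - 1) (N - 1) (\<lambda>x'. sqrt (f (ins j c x')))
       = (\<Sum>x\<in>Fib k N j c. \<Sum>i\<in>{..<k} - {j}. \<Sum>l\<in>{1..N} - {c}. W f x i l)"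
proof -
  have "Dsum (k - 1) (N - 1) (\<lambda>x'. sqrt (f (ins j c x')))
      = (\<Sum>x'\<in>Theta (k - 1) (N - 1). \<Sum>i<k - 1. \<Sum>l\<in>{1..N - 1}. W f (ins j c x') (phi j i) (sh c l))"
    unfolding Dsum_def W_def
    by (intro sum.cong refl) (simp add: ins_move[OF k j c] phi_def)
  also have "\<dots> = (\<Sum>x'\<in>Theta (k - 1) (N - 1). \<Sum>i\<in>{..<k} - {j}. \<Sum>l\<in>{1..N} - {c}. W f (ins j c x') i l)"
  proof (rule sum.cong[OF refl])
    fix x' 
    have "(\<Sum>i<k - 1. \<Sum>l\<in>{1..N - 1}. W f (ins j c x') (phi j i) (sh c l))
        = (\<Sum>i<k - 1. \<Sum>l\<in>{1..N} - {c}. W f (ins j c x') (phi j i) l)"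
      by (intro sum.cong refl sum.reindex_bij_betw[OF bij_sh[OF c]])
    also have "\<dots> = (\<Sum>i\<in>{..<k} - {j}. \<Sum>l\<in>{1..N} - {c}. W f (ins j c x') i l)"
      by (rule sum.reindex_bij_betw[OF bij_phi[OF j], where g="\<lambda>i. \<Sum>l\<in>{1..N} - {c}. W f (ins j c x') i l"])
    finally show "(\<Sum>i<k - 1. \<Sum>l\<in>{1..N - 1}. W f (ins j c x') (phi j i) (sh c l))
        = (\<Sum>i\<in>{..<k} - {j}. \<Sum>l\<in>{1..N} - {c}. W f (ins j c x') i l)" .
  qed
  also have "\<dots> = (\<Sum>x\<in>Fib k N j c. \<Sum>i\<in>{..<k} - {j}. \<Sum>l\<in>{1..N} - {c}. W f x i l)"
    by (rule sum.reindex_bij_betw[OF bij_ins[OF k j c]])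
  finally show ?thesis .
qed

definition LSI :: "nat \<Rightarrow> nat \<Rightarrow> real \<Rightarrow> bool" where
  "LSI k N A \<longleftrightarrow> (\<forall>f. (\<forall>x\<in>Theta k N. 0 \<le> f x) \<longrightarrow>
      entropy (Theta k N) (pi_unif k N) f
        \<le> A * dirichlet_form (Theta k N) (pi_unif k N) (P_ucc k N) (\<lambda>x. sqrt (f x)))"

lemma pi_unif_eq: "pi_unif k N = (\<lambda>_. 1 / real (card (Theta k N)))"
  by (rule ext) (simp add: pi_unif_def)

lemma entropy_Theta: "entropy (Theta k N) (pi_unif k N) f = ent (Theta k N) f / real (card (Theta k N))"
  unfolding pi_unif_eq by (rule entropy_unif[OF finite_Theta])

lemma ent_reindex:
  assumes "bij_betw h S T"
  shows "ent S (\<lambda>x. f (h x)) = ent T f"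
proof -
  have "card S = card T" using bij_betw_same_card[OF assms] .
  moreover have "(\<Sum>y\<in>S. f (h y)) = (\<Sum>y\<in>T. f y)" by (rule sum.reindex_bij_betw[OF assms])
  ultimately show ?thesis unfolding ent_def
    using sum.reindex_bij_betw[OF assms, of "\<lambda>x. f x * ln (f x / ((\<Sum>y\<in>T. f y) / real (card T)))"]
    by simp
qed

lemma fiber_ent_bound:
  assumes k: "1 \<le> k" and j: "j < k" and c: "c \<in> {1..N}" and kN: "k \<le> N"
    and lsi: "LSI (k - 1) (N - 1) A"
    and nn: "\<And>x. x \<in> Theta k N \<Longrightarrow> 0 \<le> f x"
  shows "ent (Fib k N j c) f \<le> A * (\<Sum>x\<in>Fib k N j c. \<Sum>i\<in>{..<k} - {j}. \<Sum>l\<in>{1..N} - {c}. W f x i l)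
             / (2 * real (k - 1) * real (N - 1))"
proof -
  define n' where "n' = real (card (Theta (k - 1) (N - 1)))"
  have n'pos: "0 < n'" unfolding n'_def
    using Theta_nonempty[of "k - 1" "N - 1"] kN finite_Theta card_gt_0_iff by fastforce
  let ?g = "\<lambda>x'. f (ins j c x')"
  have gnn: "\<forall>x\<in>Theta (k - 1) (N - 1). 0 \<le> ?g x"
    using ins_Fib[OF k j c] nn by (auto simp: Fib_def)
  have e: "ent (Fib k N j c) f = ent (Theta (k - 1) (N - 1)) ?g"
    by (rule ent_reindex[OF bij_ins[OF k j c], symmetric])
  also have "\<dots> = n' * entropy (Theta (k - 1) (N - 1)) (pi_unif (k - 1) (N - 1)) ?g"
    using n'pos by (simp add: entropy_Theta n'_def)
  also have "\<dots> \<le> n' * (A * dirichlet_form (Theta (k - 1) (N - 1)) (pi_unif (k - 1) (N - 1))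
                        (P_ucc (k - 1) (N - 1)) (\<lambda>x. sqrt (?g x)))"
    using lsi gnn n'pos unfolding LSI_def by (intro mult_left_mono) auto
  also have "\<dots> = A * (\<Sum>x\<in>Fib k N j c. \<Sum>i\<in>{..<k} - {j}. \<Sum>l\<in>{1..N} - {c}. W f x i l)
             / (2 * real (k - 1) * real (N - 1))"
    unfolding df_formula fiber_dsum[OF k j c, of f] using n'pos by (simp add: n'_def)
  finally show ?thesis .
qed

lemma coupling:
  assumes j: "j < k" and c: "c \<in> {1..N}" and c': "c' \<in> {1..N}"
    and nn: "\<And>x. x \<in> Theta k N \<Longrightarrow> 0 \<le> f x" and n'pos: "0 < n'"
  shows "(sqrt ((\<Sum>x\<in>Fib k N j c. f x) / n') - sqrt ((\<Sum>x\<in>Fib k N j c'. f x) / n'))^2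
        \<le> (1 / n') * (\<Sum>x\<in>Fib k N j c. W f x j c')"
proof -
  have mv: "\<And>x. x \<in> Fib k N j c \<Longrightarrow> move x j c' = map (tr c c') x"
    using move_map j by (auto simp: Fib_def Theta_def)
  have bij: "bij_betw (map (tr c c')) (Fib k N j c) (Fib k N j c')"
  proof (rule bij_betw_byWitness[where f'="map (tr c c')"])
    show "\<forall>a\<in>Fib k N j c. map (tr c c') (map (tr c c') a) = a" by (simp add: tr_tr map_idI)
    show "\<forall>a\<in>Fib k N j c'. map (tr c c') (map (tr c c') a) = a" by (simp add: tr_tr map_idI)
    have im: "map (tr c c') ` Fib k N j d \<subseteq> Fib k N j d'"
      if d: "d \<in> {c, c'}" and d': "d' \<in> {c, c'}" "d' \<noteq> d \<or> c = c'" for d d'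
    proof
      fix y assume "y \<in> map (tr c c') ` Fib k N j d"
      then obtain x where x: "x \<in> Theta k N" "x ! j = d" "y = map (tr c c') x"
        by (auto simp: Fib_def)
      have lj: "j < length x" using x j by (simp add: Theta_def)
      have "y \<in> Theta k N" using Theta_map_tr[OF x(1) c c'] x by simp
      moreover have "y ! j = d'" using x lj d d' by (auto simp: tr_def)
      ultimately show "y \<in> Fib k N j d'" by (simp add: Fib_def)
    qed
    show "map (tr c c') ` Fib k N j c \<subseteq> Fib k N j c'"
      using im[of c c'] by (cases "c = c'") auto
    show "map (tr c c') ` Fib k N j c' \<subseteq> Fib k N j c"
      using im[of c' c] by (cases "c = c'") auto
  qed
  have s': "(\<Sum>x\<in>Fib k N j c'. f x) = (\<Sum>x\<in>Fib k N j c. f (move x j c'))"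
    using sum.reindex_bij_betw[OF bij, of f] mv by simp
  have Fs: "\<And>x. x \<in> Fib k N j c \<Longrightarrow> x \<in> Theta k N" by (simp add: Fib_def)
  have mvT: "\<And>x. x \<in> Fib k N j c \<Longrightarrow> move x j c' \<in> Theta k N"
    using move_Theta[OF _ j c'] Fs by blast
  have key: "(sqrt (\<Sum>x\<in>Fib k N j c. f x) - sqrt (\<Sum>x\<in>Fib k N j c. f (move x j c')))^2
       \<le> (\<Sum>x\<in>Fib k N j c. (sqrt (f x) - sqrt (f (move x j c')))^2)"
    by (rule sqrt_sum_diff[OF Fib_finite]) (use nn Fs mvT in auto)
  have "(sqrt ((\<Sum>x\<in>Fib k N j c. f x) / n') - sqrt ((\<Sum>x\<in>Fib k N j c'. f x) / n'))^2
      = (sqrt (\<Sum>x\<in>Fib k N j c. f x) - sqrt (\<Sum>x\<in>Fib k N j c. f (move x j c')))^2 / n'"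
    using n'pos unfolding s' by (simp add: real_sqrt_divide power_divide diff_divide_distrib[symmetric])
  also have "\<dots> \<le> (\<Sum>x\<in>Fib k N j c. W f x j c') / n'"
    using key n'pos by (simp add: W_def divide_right_mono)
  finally show ?thesis by simp
qed

lemma marginal_j:
  assumes k: "1 \<le> k" and j: "j < k" and kN: "k \<le> N"
    and nn: "\<And>x. x \<in> Theta k N \<Longrightarrow> 0 \<le> f x"
  shows "real (card (Theta (k - 1) (N - 1))) *
            ent {1..N} (\<lambda>c. (\<Sum>x\<in>Fib k N j c. f x) / real (card (Theta (k - 1) (N - 1))))
         \<le> 3 * ln (max (real N) 3) / (2 * real N) * (\<Sum>x\<in>Theta k N. \<Sum>c'\<in>{1..N}. W f x j c')"
proof -
  define n' where "n' = real (card (Theta (k - 1) (N - 1)))"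
  define C where "C = 3 * ln (max (real N) 3)"
  define mc where "mc = (\<lambda>c. (\<Sum>x\<in>Fib k N j c. f x) / n')"
  have n'pos: "0 < n'" unfolding n'_def
    using Theta_nonempty[of "k - 1" "N - 1"] kN finite_Theta card_gt_0_iff by fastforce
  have Npos: "0 < N" using k kN by simp
  have C0: "0 \<le> C" by (simp add: C_def)
  have mcnn: "\<And>c. 0 \<le> mc c" unfolding mc_def using n'pos nn
    by (intro divide_nonneg_pos sum_nonneg) (auto simp: Fib_def)
  have "ent {1..N} mc \<le> C / (2 * real N) * (\<Sum>c\<in>{1..N}. \<Sum>c'\<in>{1..N}. (sqrt (mc c) - sqrt (mc c'))^2)"
    using marginal_ent[of "{1..N}" N mc] Npos mcnn by (simp add: C_def)
  also have "\<dots> \<le> C / (2 * real N) * (\<Sum>c\<in>{1..N}. \<Sum>c'\<in>{1..N}. (1 / n') * (\<Sum>x\<in>Fib k N j c. W f x j c'))"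
    unfolding mc_def using C0 Npos
    by (intro mult_left_mono sum_mono coupling[OF j _ _ nn n'pos]) auto
  also have "(\<Sum>c\<in>{1..N}. \<Sum>c'\<in>{1..N}. (1 / n') * (\<Sum>x\<in>Fib k N j c. W f x j c'))
      = (1 / n') * (\<Sum>x\<in>Theta k N. \<Sum>c'\<in>{1..N}. W f x j c')"
  proof -
    have "(\<Sum>c\<in>{1..N}. \<Sum>c'\<in>{1..N}. (\<Sum>x\<in>Fib k N j c. W f x j c'))
        = (\<Sum>c\<in>{1..N}. \<Sum>x\<in>Fib k N j c. \<Sum>c'\<in>{1..N}. W f x j c')"
      by (rule sum.cong[OF refl], rule sum.swap)
    also have "\<dots> = (\<Sum>x\<in>Theta k N. \<Sum>c'\<in>{1..N}. W f x j c')"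
      by (rule sum_Fib[OF j, symmetric])
    finally show ?thesis by (simp add: sum_divide_distrib[symmetric])
  qed
  finally have "ent {1..N} mc \<le> C / (2 * real N) * ((1 / n') * (\<Sum>x\<in>Theta k N. \<Sum>c'\<in>{1..N}. W f x j c'))" .
  hence "n' * ent {1..N} mc \<le> n' * (C / (2 * real N) * ((1 / n') * (\<Sum>x\<in>Theta k N. \<Sum>c'\<in>{1..N}. W f x j c')))"
    using n'pos by (intro mult_left_mono) auto
  also have "\<dots> = C / (2 * real N) * (\<Sum>x\<in>Theta k N. \<Sum>c'\<in>{1..N}. W f x j c')"
    using n'pos by simp
  finally show ?thesis by (simp add: n'_def mc_def C_def)
qed

lemma dc_fib:
  assumes j: "j < k"
  shows "(\<Sum>c\<in>{1..N}. \<Sum>x\<in>Fib k N j c. \<Sum>i\<in>{..<k} - {j}. \<Sum>l\<in>{1..N} - {c}. W f x i l)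
       \<le> (\<Sum>x\<in>Theta k N. \<Sum>i\<in>{..<k} - {j}. \<Sum>l\<in>{1..N}. W f x i l)"
proof -
  have "(\<Sum>c\<in>{1..N}. \<Sum>x\<in>Fib k N j c. \<Sum>i\<in>{..<k} - {j}. \<Sum>l\<in>{1..N} - {c}. W f x i l)
      \<le> (\<Sum>c\<in>{1..N}. \<Sum>x\<in>Fib k N j c. \<Sum>i\<in>{..<k} - {j}. \<Sum>l\<in>{1..N}. W f x i l)"
    by (intro sum_mono sum_mono2) (auto simp: W_nonneg)
  also have "\<dots> = (\<Sum>x\<in>Theta k N. \<Sum>i\<in>{..<k} - {j}. \<Sum>l\<in>{1..N}. W f x i l)"
    by (rule sum_Fib[OF j, symmetric])
  finally show ?thesis .
qed

lemma sum_j_offdiag: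
  fixes T :: "nat list \<Rightarrow> nat \<Rightarrow> real"
  shows "(\<Sum>j<k. \<Sum>x\<in>S. \<Sum>i\<in>{..<k} - {j}. T x i) = real (k - 1) * (\<Sum>x\<in>S. \<Sum>i<k. T x i)"
proof -
  have "(\<Sum>j<k. \<Sum>x\<in>S. \<Sum>i\<in>{..<k} - {j}. T x i) = (\<Sum>j<k. \<Sum>x\<in>S. (\<Sum>i<k. T x i) - T x j)"
    by (intro sum.cong refl) (simp add: sum_diff1)
  also have "\<dots> = (\<Sum>x\<in>S. \<Sum>j<k. (\<Sum>i<k. T x i) - T x j)" by (rule sum.swap)
  also have "\<dots> = (\<Sum>x\<in>S. real k * (\<Sum>i<k. T x i) - (\<Sum>i<k. T x i))"
    by (simp add: sum_subtractf)
  also have "\<dots> = (\<Sum>x\<in>S. real (k - 1) * (\<Sum>i<k. T x i))"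
    by (intro sum.cong refl) (cases k, auto simp: algebra_simps)
  finally show ?thesis by (simp add: sum_distrib_left)
qed

lemma aux_pq: "0 < p \<Longrightarrow> 0 < q \<Longrightarrow> A / (2 * p * q) * (p * D) = A / (2 * q) * (D::real)"
  by (simp add: field_simps)

lemma aux_div: "real k * e \<le> X \<Longrightarrow> 0 < n \<Longrightarrow> 0 < k \<Longrightarrow> e / n \<le> X / (real k * n)"
  by (simp add: field_simps)

lemma aux_eq: "0 < N' - 1 \<Longrightarrow> 0 < k' \<Longrightarrow> 0 < (n::real) \<Longrightarrow>
   (A / (2 * (N' - 1)) * D + C / (2 * N') * D) / (k' * n) = (N' / (N' - 1) * A + C) * (D / (2 * n * k' * N'))"
  by (simp add: field_simps)

lemma REC:
  assumes k: "1 \<le> k" and kN: "k \<le> N" and N2: "2 \<le> N" and A: "0 \<le> A"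
    and lsi: "LSI (k - 1) (N - 1) A"
  shows "LSI k N (real N / (real N - 1) * A + 3 * ln (max (real N) 3))"
  unfolding LSI_def
proof (intro allI impI)
  fix f :: "nat list \<Rightarrow> real" assume fnn: "\<forall>x\<in>Theta k N. 0 \<le> f x"
  hence nn: "\<And>x. x \<in> Theta k N \<Longrightarrow> 0 \<le> f x" by blast
  define C where "C = 3 * ln (max (real N) 3)"
  define a where "a = A / (2 * real (k - 1) * real (N - 1))"
  define b where "b = C / (2 * real N)"
  define D where "D = Dsum k N (\<lambda>x. sqrt (f x))"
  define n where "n = real (card (Theta k N))"
  have Dw: "D = (\<Sum>x\<in>Theta k N. \<Sum>i<k. \<Sum>l\<in>{1..N}. W f x i l)"
    by (simp add: D_def Dsum_def W_def)
  have D0: "0 \<le> D" unfolding Dw by (intro sum_nonneg) (simp add: W_nonneg)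
  have a0: "0 \<le> a" using A by (simp add: a_def)
  have npos: "0 < n" unfolding n_def
    using Theta_nonempty[OF kN] finite_Theta card_gt_0_iff by fastforce
  have N1: "(1::nat) \<le> N" using N2 by simp
  have perj: "ent (Theta k N) f \<le> a * (\<Sum>x\<in>Theta k N. \<Sum>i\<in>{..<k} - {j}. \<Sum>l\<in>{1..N}. W f x i l)
                 + b * (\<Sum>x\<in>Theta k N. \<Sum>c'\<in>{1..N}. W f x j c')" if j: "j < k" for j
  proof -
    have "ent (Theta k N) f = (\<Sum>c\<in>{1..N}. ent (Fib k N j c) f)
          + real (card (Theta (k - 1) (N - 1))) *
            ent {1..N} (\<lambda>c. (\<Sum>x\<in>Fib k N j c. f x) / real (card (Theta (k - 1) (N - 1))))"
      by (rule chain_rule[OF k j N1 kN nn])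
    also have "(\<Sum>c\<in>{1..N}. ent (Fib k N j c) f)
        \<le> (\<Sum>c\<in>{1..N}. a * (\<Sum>x\<in>Fib k N j c. \<Sum>i\<in>{..<k} - {j}. \<Sum>l\<in>{1..N} - {c}. W f x i l))"
      by (intro sum_mono) (use fiber_ent_bound[where f=f, OF k j _ kN lsi nn] in \<open>simp add: a_def\<close>)
    also have "\<dots> = a * (\<Sum>c\<in>{1..N}. \<Sum>x\<in>Fib k N j c. \<Sum>i\<in>{..<k} - {j}. \<Sum>l\<in>{1..N} - {c}. W f x i l)"
      by (simp add: sum_distrib_left)
    also have "\<dots> \<le> a * (\<Sum>x\<in>Theta k N. \<Sum>i\<in>{..<k} - {j}. \<Sum>l\<in>{1..N}. W f x i l)"
      by (intro mult_left_mono dc_fib[OF j] a0)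
    finally show ?thesis using marginal_j[where f=f, OF k j kN nn] by (simp add: b_def C_def)
  qed
  have "real k * ent (Theta k N) f = (\<Sum>j<k. ent (Theta k N) f)" by simp
  also have "\<dots> \<le> (\<Sum>j<k. a * (\<Sum>x\<in>Theta k N. \<Sum>i\<in>{..<k} - {j}. \<Sum>l\<in>{1..N}. W f x i l)
                 + b * (\<Sum>x\<in>Theta k N. \<Sum>c'\<in>{1..N}. W f x j c'))"
    by (intro sum_mono perj) simp
  also have "\<dots> = a * (real (k - 1) * D) + b * D"
  proof -
    have "(\<Sum>j<k. \<Sum>x\<in>Theta k N. \<Sum>i\<in>{..<k} - {j}. \<Sum>l\<in>{1..N}. W f x i l) = real (k - 1) * D"
      unfolding Dw by (rule sum_j_offdiag)
    moreover have "(\<Sum>j<k. \<Sum>x\<in>Theta k N. \<Sum>c'\<in>{1..N}. W f x j c') = D"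
      unfolding Dw by (rule sum.swap)
    ultimately show ?thesis by (simp add: sum.distrib sum_distrib_left[symmetric])
  qed
  also have "a * (real (k - 1) * D) \<le> A / (2 * (real N - 1)) * D"
  proof (cases "k = 1")
    case True thus ?thesis using A D0 N2 by (simp add: a_def)
  next
    case False
    hence "0 < real (k - 1)" using k by simp
    moreover have "real (N - 1) = real N - 1" using N2 by simp
    moreover have "0 < real N - 1" using N2 by simp
    ultimately have "a * (real (k - 1) * D) = A / (2 * (real N - 1)) * D"
      unfolding a_def using aux_pq[of "real (k - 1)" "real (N - 1)" A D] by simp
    thus ?thesis by simp
  qed
  finally have kent: "real k * ent (Theta k N) f \<le> A / (2 * (real N - 1)) * D + b * D" by simp
  have "entropy (Theta k N) (pi_unif k N) f = ent (Theta k N) f / n"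
    by (simp add: entropy_Theta n_def)
  also have "\<dots> \<le> (A / (2 * (real N - 1)) * D + b * D) / (real k * n)"
    using aux_div[OF kent npos] k by simp
  also have "\<dots> = (real N / (real N - 1) * A + C) * (D / (2 * n * real k * real N))"
    unfolding b_def by (rule aux_eq) (use npos k N2 in auto)
  also have "\<dots> = (real N / (real N - 1) * A + C) *
      dirichlet_form (Theta k N) (pi_unif k N) (P_ucc k N) (\<lambda>x. sqrt (f x))"
    by (simp add: df_formula D_def n_def)
  finally show "entropy (Theta k N) (pi_unif k N) f \<le> (real N / (real N - 1) * A + 3 * ln (max (real N) 3)) *
      dirichlet_form (Theta k N) (pi_unif k N) (P_ucc k N) (\<lambda>x. sqrt (f x))"
    by (simp add: C_def)
qed

lemma Pucc_nonneg: "0 \<le> P_ucc k N x y"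
  by (simp add: P_ucc_def)

lemma LSI_singleton:
  assumes "Theta k N = {v}" shows "LSI k N 0"
  unfolding LSI_def
proof (intro allI impI)
  fix f :: "nat list \<Rightarrow> real"
  have "ent (Theta k N) f = 0" using assms by (intro ent_const[where a="f v"]) auto
  thus "entropy (Theta k N) (pi_unif k N) f \<le> 0 * dirichlet_form (Theta k N) (pi_unif k N) (P_ucc k N) (\<lambda>x. sqrt (f x))"
    by (simp add: entropy_Theta)
qed

lemma LSI_exists: "k \<le> N \<Longrightarrow> \<exists>A\<ge>0. LSI k N A"
proof (induction k arbitrary: N)
  case 0
  have "Theta 0 N = {[]}" by (auto simp: Theta_def)
  thus ?case using LSI_singleton by blast
next
  case (Suc k)
  show ?case
  proof (cases "N = 1")
    case True
    hence "k = 0" using Suc.prems by simp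
    have "Theta (Suc 0) 1 = {[1]}"
    proof
      show "Theta (Suc 0) 1 \<subseteq> {[1]}"
      proof
        fix x assume "x \<in> Theta (Suc 0) 1"
        then obtain a where "x = [a]" "a \<in> {1..1}" by (auto simp: Theta_def length_Suc_conv)
        thus "x \<in> {[1]}" by simp
      qed
      show "{[1]} \<subseteq> Theta (Suc 0) 1" by (simp add: Theta_def)
    qed
    thus ?thesis using LSI_singleton True \<open>k = 0\<close> by blast
  next
    case False
    hence N2: "2 \<le> N" using Suc.prems by simp
    have "k \<le> N - 1" using Suc.prems by simp
    then obtain A where A: "0 \<le> A" "LSI k (N - 1) A" using Suc.IH by blast
    have "LSI (Suc k) N (real N / (real N - 1) * A + 3 * ln (max (real N) 3))"
      using REC[of "Suc k" N A] A Suc.prems N2 by simp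
    moreover have "0 \<le> real N / (real N - 1) * A + 3 * ln (max (real N) 3)"
      using A N2 by (intro add_nonneg_nonneg mult_nonneg_nonneg) auto
    ultimately show ?thesis by blast
  qed
qed

lemma LSI_mono: "LSI k N A \<Longrightarrow> A \<le> A' \<Longrightarrow> LSI k N A'"
  unfolding LSI_def
proof (intro allI impI)
  fix f :: "nat list \<Rightarrow> real"
  assume h: "\<forall>f. (\<forall>x\<in>Theta k N. 0 \<le> f x) \<longrightarrow> entropy (Theta k N) (pi_unif k N) f
        \<le> A * dirichlet_form (Theta k N) (pi_unif k N) (P_ucc k N) (\<lambda>x. sqrt (f x))"
    and AA: "A \<le> A'" and f: "\<forall>x\<in>Theta k N. 0 \<le> f x"
  have "0 \<le> dirichlet_form (Theta k N) (pi_unif k N) (P_ucc k N) (\<lambda>x. sqrt (f x))"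
    by (rule df_nonneg) (simp_all add: Pucc_nonneg pi_unif_def)
  thus "entropy (Theta k N) (pi_unif k N) f
        \<le> A' * dirichlet_form (Theta k N) (pi_unif k N) (P_ucc k N) (\<lambda>x. sqrt (f x))"
    using h f AA by (meson mult_right_mono order_trans)
qed

lemma two_elems:
  assumes "1 \<le> k" "k \<le> N" "2 \<le> N"
  shows "[1..<Suc k] \<in> Theta k N" "map (tr 1 2) [1..<Suc k] \<in> Theta k N"
    "[1..<Suc k] \<noteq> map (tr 1 2) [1..<Suc k]"
proof -
  show x1: "[1..<Suc k] \<in> Theta k N" by (rule Theta_nonempty[OF assms(2)])
  show "map (tr 1 2) [1..<Suc k] \<in> Theta k N" by (rule Theta_map_tr[OF x1]) (use assms in auto)
  have e: "[1..<Suc k] ! 0 = 1" using assms by (subst nth_upt) auto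
  have "map (tr 1 2) [1..<Suc k] ! 0 = tr 1 2 ([1..<Suc k] ! 0)" using assms by (subst nth_map) auto
  hence h2: "map (tr 1 2) [1..<Suc k] ! 0 = 2" using e by (auto simp: tr_def)
  show "[1..<Suc k] \<noteq> map (tr 1 2) [1..<Suc k]"
  proof
    assume eq: "[1..<Suc k] = map (tr 1 2) [1..<Suc k]"
    have "[1..<Suc k] ! 0 = map (tr 1 2) [1..<Suc k] ! 0" using arg_cong[of _ _ "\<lambda>l. l ! 0", OF eq] .
    thus False using e h2 by linarith
  qed
qed

lemma alpha_lower:
  assumes k: "1 \<le> k" "k \<le> N" "2 \<le> N" and B: "0 < B" and lsi: "LSI k N B"
  shows "1 / B \<le> alpha_ucc k N"
proof -
  note te = two_elems[OF k]
  show ?thesis unfolding alpha_ucc_def pi_unif_eq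
    by (rule LS_lower[OF finite_Theta te B]) (use lsi Pucc_nonneg in \<open>auto simp: LSI_def pi_unif_eq\<close>)
qed

lemma alpha_upper:
  assumes a: "0 < alpha_ucc k N"
  shows "LSI k N (1 / alpha_ucc k N)"
  unfolding LSI_def
proof (intro allI impI)
  fix f :: "nat list \<Rightarrow> real" assume f: "\<forall>x\<in>Theta k N. 0 \<le> f x"
  show "entropy (Theta k N) (pi_unif k N) f \<le> 1 / alpha_ucc k N *
      dirichlet_form (Theta k N) (pi_unif k N) (P_ucc k N) (\<lambda>x. sqrt (f x))"
    using LS_upper[OF finite_Theta _ _ f, of "P_ucc k N"] a Pucc_nonneg
    unfolding alpha_ucc_def pi_unif_eq by simp
qed

theorem mainTheorem6:
  fixes N k :: nat
  assumes "N \<ge> 3" and "2 \<le> k" and "k \<le> N"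
  shows "1 / alpha_ucc k N
           \<le> real N / (real N - 1) * (1 / alpha_ucc (k - 1) (N - 1)) + 3 * ln (real N)"
proof -
  have k': "1 \<le> k - 1" "k - 1 \<le> N - 1" "2 \<le> N - 1" using assms by auto
  obtain A0 where A0: "0 \<le> A0" "LSI (k - 1) (N - 1) A0" using LSI_exists[OF k'(2)] by blast
  have "LSI (k - 1) (N - 1) (A0 + 1)" by (rule LSI_mono[OF A0(2)]) simp
  hence "1 / (A0 + 1) \<le> alpha_ucc (k - 1) (N - 1)"
    using alpha_lower[OF k'] A0 by simp
  moreover have "0 < 1 / (A0 + 1)" using A0 by simp
  ultimately have a'pos: "0 < alpha_ucc (k - 1) (N - 1)" by linarith
  have lsi': "LSI (k - 1) (N - 1) (1 / alpha_ucc (k - 1) (N - 1))" by (rule alpha_upper[OF a'pos])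
  define B where "B = real N / (real N - 1) * (1 / alpha_ucc (k - 1) (N - 1)) + 3 * ln (max (real N) 3)"
  have lsi: "LSI k N B" unfolding B_def
    using REC[OF _ assms(3) _ _ lsi'] assms a'pos by simp
  have Bpos: "0 < B" unfolding B_def using assms a'pos
    by (intro add_nonneg_pos mult_nonneg_nonneg) auto
  have lo: "1 / B \<le> alpha_ucc k N" by (rule alpha_lower[OF _ _ _ Bpos lsi]) (use assms in auto)
  have "0 < 1 / B" using Bpos by simp
  hence ap: "0 < alpha_ucc k N" using lo by linarith
  have "1 / alpha_ucc k N \<le> 1 / (1 / B)" using lo ap Bpos by (intro divide_left_mono) auto
  hence "1 / alpha_ucc k N \<le> B" by simp
  moreover have "max (real N) 3 = real N" using assms by simp
  ultimately show ?thesis by (simp add: B_def)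
qed

end
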